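(* Let $k\ge3$ and let $\boldsymbol x^*$ be a pure Nash equilibrium of $\mathcal L(n,S_k)$. Then: (a) some player is located at the center $v_0$; (b) for every $x\in S_k\setminus\{v_0\}$, $\operatorname{card}\{i:x_i^*=x\}\le2$; (c) $\operatorname{card}\{i:x_i^*=v_0\}\le k$; (d) if some player is located in $S_k\setminus\{v_0\}$, then for every $j\in\{1,\dots,k\}$ the edge $[v_0,v_j]$ contains, outside $v_0$, at least two players, and the two players on $[v_0,v_j]\setminus\{v_0\}$ that are farthest from $v_0$ are located at the same point.
   Context: The star $S_k$ is the network with vertices $v_0,v_1,\dots,v_k$ and edges $[v_0,v_j]$, $j=1,\dots,k$, each of length $1$. It carries length measure $\lambda$ and shortest-path distance $d$. Location game $\mathcal L(n,S_k)$: $n$ players each choose a point of $S_k$. Consumers are distributed according to $\lambda$, and each shops at a closest occupied location. Consumers equidistant from several closest occupied locations are split equally among those locations, and the share of a location is split equally among the players located there. Payoff is the mass of consumers attracted. Nash equilibria are pure. *)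

theory Defs
  imports "HOL-Analysis.Analysis"
begin

text \<open>Points of the star S_k: the centre v0 is (0,0); a point on edge [v0,vj]
  at distance t (0 < t <= 1) from v0 is (j,t), with 1 <= j <= k.\<close>

type_synonym spt = "nat \<times> real"

definition center :: spt where "center = (0, 0)"

definition star_pt :: "nat \<Rightarrow> spt \<Rightarrow> bool" where
  "star_pt k p \<longleftrightarrow> p = center \<or> (1 \<le> fst p \<and> fst p \<le> k \<and> 0 < snd p \<and> snd p \<le> 1)"

definition star_dist :: "spt \<Rightarrow> spt \<Rightarrow> real" where
  "star_dist p q = (if fst p = fst q then \<bar>snd p - snd q\<bar> else snd p + snd q)"

definition share :: "nat \<Rightarrow> (nat \<Rightarrow> spt) \<Rightarrow> nat \<Rightarrow> spt \<Rightarrow> real" where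
  "share n x i y =
     (let D = Min ((\<lambda>m. star_dist y (x m)) ` {..<n});
          C = {p \<in> x ` {..<n}. star_dist y p = D}
      in if star_dist y (x i) = D
         then 1 / (real (card C) * real (card {m \<in> {..<n}. x m = x i}))
         else 0)"

definition payoff :: "nat \<Rightarrow> nat \<Rightarrow> (nat \<Rightarrow> spt) \<Rightarrow> nat \<Rightarrow> real" where
  "payoff k n x i = (\<Sum>j = 1..k. integral {0..1} (\<lambda>t. share n x i (j, t)))"

definition nash_eq :: "nat \<Rightarrow> nat \<Rightarrow> (nat \<Rightarrow> spt) \<Rightarrow> bool" where
  "nash_eq k n x \<longleftrightarrow>
     (\<forall>i<n. star_pt k (x i)) \<and>
     (\<forall>i<n. \<forall>y. star_pt k y \<longrightarrow> payoff k n (x(i := y)) i \<le> payoff k n x i)"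

end

theory Submission
  imports Defs
begin

lemma card_filter_sum: "finite A \<Longrightarrow> card {p \<in> A. P p} = (\<Sum>p\<in>A. if P p then 1 else 0)"
  by (simp add: sum.If_cases Int_def)

lemma fin_less [simp]: "finite {m::nat. m < n \<and> P m}"
  by (rule finite_subset[of _ "{..<n}"]) auto

lemma dist_meas: "(\<lambda>t. star_dist (j,t) p) \<in> borel_measurable borel"
proof (rule borel_measurable_continuous_onI)
  show "continuous_on UNIV (\<lambda>t. star_dist (j, t) p)"
    by (cases "j = fst p") (simp_all add: star_dist_def continuous_intros)
qed

lemma ind_meas: assumes "f \<in> borel_measurable borel" "g \<in> borel_measurable borel"
  shows "(\<lambda>t. if (f t::real) = g t then (1::real) else 0) \<in> borel_measurable borel"
proof (rule measurable_If)
  show "{x \<in> space borel. f x = g x} \<in> sets borel"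
    using assms by (rule measurable_equality_set)
qed simp_all

lemma share_meas: "(\<lambda>t. share n x i (j, t)) \<in> borel_measurable borel"
proof -
  define D where "D = (\<lambda>t. Min ((\<lambda>m. star_dist (j,t) (x m)) ` {..<n}))"
  have Dm: "D \<in> borel_measurable borel"
    unfolding D_def by (rule borel_measurable_Min) (auto intro: dist_meas)
  define S where "S = (\<lambda>t. (\<Sum>p\<in>x ` {..<n}. if star_dist (j,t) p = D t then 1 else (0::real)))"
  have Sm: "S \<in> borel_measurable borel"
    unfolding S_def by (rule borel_measurable_sum) (rule ind_meas[OF dist_meas Dm])
  define c where "c = real (card {m \<in> {..<n}. x m = x i})"
  have Q: "(\<lambda>t. 1 / (S t * c)) \<in> borel_measurable borel"
    by (intro borel_measurable_divide borel_measurable_times Sm borel_measurable_const)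
  have eq: "(\<lambda>t. share n x i (j, t)) = (\<lambda>t. if star_dist (j,t) (x i) = D t then 1 / (S t * c) else 0)"
  proof (rule ext)
    fix t
    have "real (card {p \<in> x ` {..<n}. star_dist (j,t) p = D t}) = S t"
      unfolding S_def by (subst card_filter_sum) (auto simp: of_nat_sum intro!: sum.cong)
    then show "share n x i (j, t) = (if star_dist (j,t) (x i) = D t then 1 / (S t * c) else 0)"
      by (simp add: share_def Let_def D_def c_def)
  qed
  show ?thesis unfolding eq
  proof (rule measurable_If)
    show "{t \<in> space borel. star_dist (j, t) (x i) = D t} \<in> sets borel"
      using dist_meas Dm by (rule measurable_equality_set)
  qed (use Q in simp_all)
qed

lemma share_nonneg: "share n x i y \<ge> 0"
  by (simp add: share_def Let_def)

lemma share_le: assumes "i < n" shows "share n x i y \<le> 1 / real (card {m\<in>{..<n}. x m = x i})"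
proof -
  define D where "D = Min ((\<lambda>m. star_dist y (x m)) ` {..<n})"
  define C where "C = {p \<in> x ` {..<n}. star_dist y p = D}"
  have cm: "card {m\<in>{..<n}. x m = x i} \<ge> 1"
  proof -
    have "card {i} \<le> card {m\<in>{..<n}. x m = x i}" using assms by (intro card_mono) auto
    then show ?thesis by simp
  qed
  show ?thesis
  proof (cases "star_dist y (x i) = D")
    case True
    then have "x i \<in> C" using assms by (auto simp: C_def)
    then have "card {x i} \<le> card C" unfolding C_def by (intro card_mono) auto
    then have "card C \<ge> 1" by simp
    then have "real (card C) * real (card {m\<in>{..<n}. x m = x i}) \<ge> real (card {m\<in>{..<n}. x m = x i})"
      using cm by (simp add: mult_le_cancel_right1)
    then have "1 / (real (card C) * real (card {m\<in>{..<n}. x m = x i})) \<le> 1 / real (card {m\<in>{..<n}. x m = x i})"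
      using cm by (intro divide_left_mono) auto
    then show ?thesis using True by (simp add: share_def Let_def D_def C_def)
  next
    case False
    then show ?thesis by (simp add: share_def Let_def D_def)
  qed
qed

lemma card_self_ge1: "(i::nat) < n \<Longrightarrow> card {m\<in>{..<n}. x m = x i} \<ge> 1"
proof -
  assume "i < n"
  then have "card {i} \<le> card {m\<in>{..<n}. x m = x i}" by (intro card_mono) auto
  then show ?thesis by simp
qed

lemma share_le_half: "i < n \<Longrightarrow> card {m\<in>{..<n}. x m = x i} \<ge> 2 \<Longrightarrow> share n x i y \<le> 1/2"
proof -
  assume a: "i < n" "card {m\<in>{..<n}. x m = x i} \<ge> 2"
  have "1 / real (card {m\<in>{..<n}. x m = x i}) \<le> 1/2"
    using a(2) by (simp add: divide_simps)
  then show ?thesis using share_le[OF a(1), of x y] by linarith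
qed

lemma share_zero: assumes "i < n" "m < n" "star_dist y (x m) < star_dist y (x i)"
  shows "share n x i y = 0"
proof -
  have "Min ((\<lambda>m. star_dist y (x m)) ` {..<n}) \<le> star_dist y (x m)"
    using assms by (intro Min_le) auto
  then have "star_dist y (x i) \<noteq> Min ((\<lambda>m. star_dist y (x m)) ` {..<n})" using assms by linarith
  then show ?thesis unfolding share_def Let_def by simp
qed

lemma share_one: assumes "i < n" "\<forall>m<n. m \<noteq> i \<longrightarrow> star_dist y (x i) < star_dist y (x m)"
  shows "share n x i y = 1"
proof -
  have D: "Min ((\<lambda>m. star_dist y (x m)) ` {..<n}) = star_dist y (x i)"
  proof (rule Min_eqI)
    show "finite ((\<lambda>m. star_dist y (x m)) ` {..<n})" by simp
    show "z \<in> (\<lambda>m. star_dist y (x m)) ` {..<n} \<Longrightarrow> star_dist y (x i) \<le> z" for z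
      using assms by (cases "z = star_dist y (x i)") force+
    show "star_dist y (x i) \<in> (\<lambda>m. star_dist y (x m)) ` {..<n}" using assms by auto
  qed
  have C: "{p \<in> x ` {..<n}. star_dist y p = star_dist y (x i)} = {x i}"
    using assms by force
  have M: "{m\<in>{..<n}. x m = x i} = {i}"
    using assms by force
  show ?thesis unfolding share_def Let_def D C M by simp
qed

lemma share_dev_one: assumes "i < n" "\<forall>m<n. m \<noteq> i \<longrightarrow> star_dist y q < star_dist y (x m)"
  shows "share n (x(i:=q)) i y = 1"
  using assms by (intro share_one) auto

definition eint :: "nat \<Rightarrow> (nat \<Rightarrow> spt) \<Rightarrow> nat \<Rightarrow> nat \<Rightarrow> real" where
  "eint n x i j = integral {0..1} (\<lambda>t. share n x i (j,t))"

lemma payoff_eint: "payoff k n x i = (\<Sum>j=1..k. eint n x i j)"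
  by (simp add: payoff_def eint_def)

lemma inv_nat_le1: "1 / (real a * real b) \<le> 1"
proof (cases "a = 0 \<or> b = 0")
  case True then show ?thesis by auto
next
  case False
  then have "real a \<ge> 1" "real b \<ge> 1" by auto
  then have "1 \<le> real a * real b" using mult_mono[of 1 "real a" 1 "real b"] by simp
  then show ?thesis by simp
qed

lemma share_le1g: "share n x i y \<le> 1"
  unfolding share_def Let_def using inv_nat_le1 by auto

lemma share_le1: "i < n \<Longrightarrow> share n x i y \<le> 1"
  by (rule share_le1g)

lemma share_integrable: "(\<lambda>t. share n x i (j,t)) integrable_on {0..1}"
proof (rule measurable_bounded_by_integrable_imp_integrable_real)
  show "(\<lambda>t. share n x i (j, t)) \<in> borel_measurable (lebesgue_on {0..1})"
    using share_meas by (simp add: measurable_completion measurable_restrict_space1)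
  show "(\<lambda>t. 1::real) integrable_on {0..1::real}"
    by (rule Henstock_Kurzweil_Integration.integrable_const_ivl)
  show "\<bar>share n x i (j, t)\<bar> \<le> 1" for t
    using share_nonneg[of n x i] share_le1g[of n x i] by simp
qed simp

lemma eint_nonneg: "eint n x i j \<ge> 0"
  unfolding eint_def by (rule integral_nonneg[OF share_integrable]) (simp add: share_nonneg)

lemma eint_upper:
  assumes "0 \<le> a" "a \<le> b" "b \<le> 1" "0 \<le> c"
    and le: "\<And>t. 0 \<le> t \<Longrightarrow> t \<le> 1 \<Longrightarrow> share n x i (j,t) \<le> c"
    and z: "\<And>t. 0 \<le> t \<Longrightarrow> t \<le> 1 \<Longrightarrow> t < a \<or> b < t \<Longrightarrow> share n x i (j,t) \<le> 0"
  shows "eint n x i j \<le> c * (b - a)"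
proof -
  have g: "((\<lambda>t. if t \<in> {a..b} then c else 0) has_integral (c * (b - a))) {0..1::real}"
  proof -
    have "((\<lambda>t. c) has_integral (c * (b - a))) ({a..b} \<inter> {0..1})"
    proof -
      have eq: "{a..b} \<inter> {0..1} = {a..b}" using assms by auto
      have "((\<lambda>t. c) has_integral (c * (b - a))) {a..b}"
        using has_integral_const_real[of c a b] assms by (simp add: mult.commute)
      then show ?thesis unfolding eq .
    qed
    then show ?thesis by (subst has_integral_restrict_Int)
  qed
  have "eint n x i j \<le> c * (b - a)"
    unfolding eint_def
  proof (rule has_integral_le[OF integrable_integral[OF share_integrable] g])
    fix t :: real assume "t \<in> {0..1}"
    then show "share n x i (j, t) \<le> (if t \<in> {a..b} then c else 0)"
      using le z by auto
  qed
  then show ?thesis .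
qed

lemma eint_lower:
  assumes "0 \<le> a" "b \<le> 1"
    and ge: "\<And>t. a < t \<Longrightarrow> t < b \<Longrightarrow> share n x i (j,t) \<ge> 1"
  shows "eint n x i j \<ge> b - a"
proof (cases "a < b")
  case False
  then show ?thesis using eint_nonneg[of n x i j] by linarith
next
  case True
  have g: "((\<lambda>t. if t \<in> {a<..<b} then 1 else 0) has_integral (b - a)) {0..1::real}"
  proof -
    have "((\<lambda>t. 1::real) has_integral (b - a)) {a..b}"
      using has_integral_const_real[of "1::real" a b] True by simp
    then have "((\<lambda>t. 1::real) has_integral (b - a)) {a<..<b}"
      by (simp add: has_integral_Icc_iff_Ioo)
    moreover have eq: "{a<..<b} \<inter> {0..1} = {a<..<b}" using assms by auto
    ultimately show ?thesis by (subst has_integral_restrict_Int) (simp only: eq)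
  qed
  show ?thesis
    unfolding eint_def
  proof (rule has_integral_le[OF g integrable_integral[OF share_integrable]])
    fix t :: real assume "t \<in> {0..1}"
    then show "(if t \<in> {a<..<b} then 1 else 0) \<le> share n x i (j, t)"
      using ge share_nonneg[of n x i] by auto
  qed
qed

lemma eint_zero:
  assumes "\<And>t. 0 \<le> t \<Longrightarrow> t \<le> 1 \<Longrightarrow> share n x i (j,t) \<le> 0"
  shows "eint n x i j \<le> 0"
  using eint_upper[of 0 0 0 n x i j] assms by auto

lemma sdist: "star_dist (j,t) (a,b) = (if j = a then \<bar>t - b\<bar> else t + b)"
  by (simp add: star_dist_def)

lemma sdist_center: "j \<noteq> 0 \<Longrightarrow> star_dist (j,t) center = t"
  by (simp add: star_dist_def center_def)


lemma sdist2: "star_dist (j,t) p = (if j = fst p then \<bar>t - snd p\<bar> else t + snd p)"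
  by (simp add: star_dist_def)

lemma ex_min_pl: fixes n :: nat assumes "\<exists>m<n. P m"
  shows "\<exists>m0<n. P m0 \<and> (\<forall>m<n. P m \<longrightarrow> (f m0::real) \<le> f m)"
proof -
  let ?S = "{m. m<n \<and> P m}"
  have fin: "finite (f ` ?S)" by (intro finite_imageI) auto
  have ne: "f ` ?S \<noteq> {}" using assms by auto
  obtain m0 where m0: "m0 \<in> ?S" "f m0 = Min (f ` ?S)" using Min_in[OF fin ne] by auto
  have "\<forall>m<n. P m \<longrightarrow> f m0 \<le> f m" using m0(2) fin by auto
  then show ?thesis using m0(1) by auto
qed

lemma ex_max_pl: fixes n :: nat assumes "\<exists>m<n. P m"
  shows "\<exists>m0<n. P m0 \<and> (\<forall>m<n. P m \<longrightarrow> (f m::real) \<le> f m0)"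
proof -
  let ?S = "{m. m<n \<and> P m}"
  have fin: "finite (f ` ?S)" by (intro finite_imageI) auto
  have ne: "f ` ?S \<noteq> {}" using assms by auto
  obtain m0 where m0: "m0 \<in> ?S" "f m0 = Max (f ` ?S)" using Max_in[OF fin ne] by auto
  have "\<forall>m<n. P m \<longrightarrow> f m \<le> f m0" using m0(2) fin by auto
  then show ?thesis using m0(1) by auto
qed

lemma sum_ge3:
  fixes g :: "nat \<Rightarrow> real"
  assumes "e \<in> {1..k}" "j1 \<in> {1..k}" "j2 \<in> {1..k}" "e \<noteq> j1" "e \<noteq> j2" "j1 \<noteq> j2"
    "\<And>j. j \<in> {1..k} \<Longrightarrow> j \<notin> {e,j1,j2} \<Longrightarrow> 0 \<le> g j"
  shows "g e + g j1 + g j2 \<le> (\<Sum>j=1..k. g j)"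
proof -
  have "(\<Sum>j\<in>{e,j1,j2}. g j) \<le> (\<Sum>j=1..k. g j)"
    by (rule sum_mono2) (use assms in auto)
  then show ?thesis using assms by simp
qed

lemma sum_ge2:
  fixes g :: "nat \<Rightarrow> real"
  assumes "e \<in> {1..k}" "j1 \<in> {1..k}" "e \<noteq> j1"
    "\<And>j. j \<in> {1..k} \<Longrightarrow> j \<notin> {e,j1} \<Longrightarrow> 0 \<le> g j"
  shows "g e + g j1 \<le> (\<Sum>j=1..k. g j)"
proof -
  have "(\<Sum>j\<in>{e,j1}. g j) \<le> (\<Sum>j=1..k. g j)"
    by (rule sum_mono2) (use assms in auto)
  then show ?thesis using assms by simp
qed

lemma sum_ge1:
  fixes g :: "nat \<Rightarrow> real"
  assumes "e \<in> {1..k}" "\<And>j. j \<in> {1..k} \<Longrightarrow> j \<noteq> e \<Longrightarrow> 0 \<le> g j"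
  shows "g e \<le> (\<Sum>j=1..k. g j)"
proof -
  have "(\<Sum>j\<in>{e}. g j) \<le> (\<Sum>j=1..k. g j)"
    by (rule sum_mono2) (use assms in auto)
  then show ?thesis using assms by simp
qed

lemma two_others: fixes k e :: nat assumes "k \<ge> 3" "e \<in> {1..k}"
  shows "\<exists>j1 j2. j1 \<in> {1..k} \<and> j2 \<in> {1..k} \<and> e \<noteq> j1 \<and> e \<noteq> j2 \<and> j1 \<noteq> j2"
proof (cases "e = 1")
  case True then show ?thesis using assms by (intro exI[of _ 2] exI[of _ 3]) auto
next
  case False
  show ?thesis
  proof (cases "e = 2")
    case True then show ?thesis using assms by (intro exI[of _ 1] exI[of _ 3]) auto
  next
    case False
    then show ?thesis using assms \<open>e \<noteq> 1\<close> by (intro exI[of _ 1] exI[of _ 2]) auto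
  qed
qed



lemma ne_pt: "nash_eq k n x \<Longrightarrow> i < n \<Longrightarrow> star_pt k (x i)"
  by (simp add: nash_eq_def)

lemma ne_dev: "nash_eq k n x \<Longrightarrow> i < n \<Longrightarrow> star_pt k y \<Longrightarrow> payoff k n (x(i:=y)) i \<le> payoff k n x i"
  unfolding nash_eq_def by blast

lemma noncenter_pt: "star_pt k p \<Longrightarrow> p \<noteq> center \<Longrightarrow> 1 \<le> fst p \<and> fst p \<le> k \<and> 0 < snd p \<and> snd p \<le> 1"
  by (auto simp: star_pt_def)

lemma center_pt: "star_pt k center"
  by (simp add: star_pt_def)

lemma edge_pt: "1 \<le> j \<Longrightarrow> j \<le> k \<Longrightarrow> 0 < t \<Longrightarrow> t \<le> 1 \<Longrightarrow> star_pt k (j,t)"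
  by (simp add: star_pt_def)

lemma card1_unique: "card {m\<in>{..<n::nat}. x m = x i} = 1 \<Longrightarrow> i < n \<Longrightarrow> m < n \<Longrightarrow> x m = x i \<Longrightarrow> m = i"
proof -
  assume a: "card {m\<in>{..<n::nat}. x m = x i} = 1" "i < n" "m < n" "x m = x i"
  obtain z where z: "{m\<in>{..<n::nat}. x m = x i} = {z}" using card_1_singletonE[OF a(1)] by blast
  have "m \<in> {z}" using a(3,4) unfolding z[symmetric] by simp
  moreover have "i \<in> {z}" using a(2) unfolding z[symmetric] by simp
  ultimately show "m = i" by simp
qed

lemma sum_upper1:
  fixes g :: "nat \<Rightarrow> real"
  assumes "e \<in> {1..k}" "\<And>j. j \<in> {1..k} \<Longrightarrow> j \<noteq> e \<Longrightarrow> g j \<le> 0"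
  shows "(\<Sum>j=1..k. g j) \<le> g e"
  using sum_ge1[of e k "\<lambda>j. - g j"] assms by (simp add: sum_negf)

lemma partA:
  fixes k n :: nat and x :: "nat \<Rightarrow> spt"
  assumes k3: "k \<ge> 3" and n2: "n \<ge> 2" and ne: "nash_eq k n x"
  shows "\<exists>i<n. x i = center"
proof (rule ccontr)
  assume "\<not> (\<exists>i<n. x i = center)"
  then have nc: "x m \<noteq> center" if "m < n" for m using that by blast
  have pt: "1 \<le> fst (x m) \<and> fst (x m) \<le> k \<and> 0 < snd (x m) \<and> snd (x m) \<le> 1" if "m < n" for m
    using noncenter_pt[OF ne_pt[OF ne that] nc[OF that]] .
  have "\<exists>m<n. True" using n2 by (intro exI[of _ 0]) auto
  from ex_min_pl[OF this, of "\<lambda>m. snd (x m)"]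
  have "\<exists>m0<n. True \<and> (\<forall>m<n. True \<longrightarrow> snd (x m0) \<le> snd (x m))" .
  then obtain i0 where i0: "i0 < n" "\<forall>m<n. True \<longrightarrow> snd (x i0) \<le> snd (x m)" by blast
  define e where "e = fst (x i0)"
  define r where "r = snd (x i0)"
  have xi0: "x i0 = (e, r)" by (simp add: e_def r_def)
  have e1: "1 \<le> e" "e \<le> k" and r0: "0 < r" "r \<le> 1" using pt[OF i0(1)] by (auto simp: e_def r_def)
  have ek: "e \<in> {1..k}" using e1 by simp
  have rmin: "r \<le> snd (x m)" if "m < n" for m using i0 that by (simp add: r_def)
  define mp where "mp = card {m\<in>{..<n}. x m = x i0}"
  have mp1: "mp \<ge> 1" using card_self_ge1[OF i0(1)] by (simp add: mp_def)
  define c :: real where "c = (if mp \<ge> 2 then 1/2 else 1)"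
  have csh: "share n x i0 y \<le> c" for y
    using share_le_half[OF i0(1), of x y] share_le1[OF i0(1), of x y] by (simp add: c_def mp_def)
  have c0: "0 \<le> c" "c \<le> 1" by (auto simp: c_def)
  define x0 where "x0 = x(i0 := center)"
  have Dle: "payoff k n x0 i0 \<le> payoff k n x i0"
    unfolding x0_def by (rule ne_dev[OF ne i0(1) center_pt])

  have piN: "eint n x i0 j \<le> c * ((snd (x mj) - r) / 2)"
    if "j \<noteq> e" "mj < n" "fst (x mj) = j" for j mj
  proof -
    have "eint n x i0 j \<le> c * ((snd (x mj) - r) / 2 - 0)"
    proof (rule eint_upper)
      show "0 \<le> (0::real)" by simp
      show "0 \<le> (snd (x mj) - r) / 2" using rmin[OF that(2)] by simp
      show "(snd (x mj) - r) / 2 \<le> 1" using pt[OF that(2)] r0 by simp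
      show "0 \<le> c" by (rule c0)
      show "share n x i0 (j, t) \<le> c" for t by (rule csh)
      fix t :: real assume t: "0 \<le> t" "t \<le> 1" "t < 0 \<or> (snd (x mj) - r) / 2 < t"
      have "star_dist (j,t) (x mj) < star_dist (j,t) (x i0)"
        using t that pt[OF that(2)] r0 by (auto simp: sdist2 xi0 abs_if)
      then show "share n x i0 (j, t) \<le> 0" using share_zero[OF i0(1) that(2)] by simp
    qed
    then show ?thesis by simp
  qed

  have DN: "eint n x0 i0 j \<ge> snd (x mj) / 2"
    if "j \<in> {1..k}" "j \<noteq> e" "mj < n" "fst (x mj) = j" "\<forall>m<n. fst (x m) = j \<longrightarrow> snd (x mj) \<le> snd (x m)" for j mj
  proof -
    have "eint n x0 i0 j \<ge> snd (x mj) / 2 - 0"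
    proof (rule eint_lower)
      show "snd (x mj) / 2 \<le> 1" using pt[OF that(3)] by simp
      fix t :: real assume t: "0 < t" "t < snd (x mj) / 2"
      have "\<forall>m<n. m \<noteq> i0 \<longrightarrow> star_dist (j,t) center < star_dist (j,t) (x m)"
      proof (intro allI impI)
        fix m assume m: "m < n" "m \<noteq> i0"
        show "star_dist (j,t) center < star_dist (j,t) (x m)"
        proof (cases "fst (x m) = j")
          case True
          then have "snd (x mj) \<le> snd (x m)" using that(5) m by auto
          then show ?thesis using True t that(1) by (auto simp: sdist2 center_def abs_if)
        next
          case False
          then show ?thesis using pt[OF m(1)] t that(1) by (auto simp: sdist2 center_def)
        qed
      qed
      then show "1 \<le> share n x0 i0 (j, t)" unfolding x0_def using share_dev_one[OF i0(1)] by simp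
    qed simp
    then show ?thesis by simp
  qed

  have piM: "eint n x i0 j \<le> c" for j
  proof -
    have "eint n x i0 j \<le> c * (1 - 0)"
      by (rule eint_upper) (use c0 csh in auto)
    then show ?thesis by simp
  qed

  have DM: "eint n x0 i0 j \<ge> 1" if "j \<in> {1..k}" "\<forall>m<n. fst (x m) \<noteq> j" for j
  proof -
    have "eint n x0 i0 j \<ge> 1 - 0"
    proof (rule eint_lower)
      fix t :: real assume t: "0 < t" "t < 1"
      have "\<forall>m<n. m \<noteq> i0 \<longrightarrow> star_dist (j,t) center < star_dist (j,t) (x m)"
        using that pt t by (auto simp: sdist2 center_def)
      then show "1 \<le> share n x0 i0 (j, t)" unfolding x0_def using share_dev_one[OF i0(1)] by simp
    qed simp_all
    then show ?thesis by simp
  qed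

  have G: "eint n x0 i0 j - eint n x i0 j \<ge> 0 \<and> (mp \<ge> 2 \<longrightarrow> eint n x0 i0 j - 2 * eint n x i0 j \<ge> 0)
      \<and> ((\<exists>m<n. fst (x m) = j) \<longrightarrow> eint n x0 i0 j - eint n x i0 j \<ge> r/2 \<and> (mp \<ge> 2 \<longrightarrow> eint n x0 i0 j - 2 * eint n x i0 j \<ge> r/2))"
    if "j \<in> {1..k}" "j \<noteq> e" for j
  proof (cases "\<exists>m<n. fst (x m) = j")
    case True
    then obtain mj where mj: "mj < n" "fst (x mj) = j" "\<forall>m<n. fst (x m) = j \<longrightarrow> snd (x mj) \<le> snd (x m)"
      using ex_min_pl[of n "\<lambda>m. fst (x m) = j" "\<lambda>m. snd (x m)"] by auto
    have a: "eint n x i0 j \<le> c * ((snd (x mj) - r) / 2)" by (rule piN[OF that(2) mj(1,2)])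
    have b: "eint n x0 i0 j \<ge> snd (x mj) / 2" by (rule DN[OF that mj])
    have rr: "r \<le> snd (x mj)" by (rule rmin[OF mj(1)])
    have 1: "eint n x0 i0 j - eint n x i0 j \<ge> r/2"
    proof -
      have "c * ((snd (x mj) - r) / 2) \<le> (snd (x mj) - r) / 2"
        using c0 rr by (intro mult_left_le_one_le) auto
      with a have p': "eint n x i0 j \<le> (snd (x mj) - r) / 2" by (rule order_trans)
      have "snd (x mj) / 2 - (snd (x mj) - r) / 2 \<le> eint n x0 i0 j - eint n x i0 j"
        using b p' by (rule diff_mono)
      moreover have "snd (x mj) / 2 - (snd (x mj) - r) / 2 = r / 2" by (simp add: field_simps)
      ultimately show ?thesis by simp
    qed
    have 2: "mp \<ge> 2 \<longrightarrow> eint n x0 i0 j - 2 * eint n x i0 j \<ge> r/2"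
      using a b by (auto simp: c_def)
    show ?thesis using 1 2 True r0 by auto
  next
    case False
    have a: "eint n x0 i0 j \<ge> 1" using DM[OF that(1)] False by auto
    show ?thesis using a piM[of j] False by (auto simp: c_def split: if_splits)
  qed

  have De_gen: "eint n x0 i0 e \<ge> r/2"
  proof -
    have "eint n x0 i0 e \<ge> r/2 - 0"
    proof (rule eint_lower)
      show "r/2 \<le> 1" using r0 by simp
      fix t :: real assume t: "0 < t" "t < r/2"
      have "\<forall>m<n. m \<noteq> i0 \<longrightarrow> star_dist (e,t) center < star_dist (e,t) (x m)"
      proof (intro allI impI)
        fix m assume m: "m < n" "m \<noteq> i0"
        show "star_dist (e,t) center < star_dist (e,t) (x m)"
          using rmin[OF m(1)] pt[OF m(1)] t e1 by (auto simp: sdist2 center_def abs_if)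
      qed
      then show "1 \<le> share n x0 i0 (e, t)" unfolding x0_def using share_dev_one[OF i0(1)] by simp
    qed simp
    then show ?thesis by simp
  qed

  have uniq: "m = i0" if "mp = 1" "m < n" "x m = x i0" for m
    using card1_unique[of n x i0 m] that i0(1) by (simp add: mp_def)

  define Qex where "Qex = (\<exists>m<n. fst (x m) = e \<and> x m \<noteq> x i0)"

  have QB: "\<exists>be. r \<le> be \<and> be \<le> 1 \<and> eint n x i0 e \<le> c * be \<and> (mp = 1 \<longrightarrow> eint n x0 i0 e \<ge> be - r/2)
     \<and> (mp = 1 \<longrightarrow> \<not> Qex \<longrightarrow> eint n x0 i0 e \<ge> 1)
     \<and> (\<forall>\<epsilon>. 0 < \<epsilon> \<longrightarrow> r + \<epsilon> \<le> 1 \<longrightarrow> eint n (x(i0 := (e, r+\<epsilon>))) i0 e \<ge> be - (r + \<epsilon>))"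
  proof (cases Qex)
    case True
    then have "\<exists>m<n. fst (x m) = e \<and> x m \<noteq> x i0" by (simp add: Qex_def)
    then obtain mq where mq: "mq < n" "fst (x mq) = e \<and> x mq \<noteq> x i0"
      "\<forall>m<n. fst (x m) = e \<and> x m \<noteq> x i0 \<longrightarrow> snd (x mq) \<le> snd (x m)"
      using ex_min_pl[of n "\<lambda>m. fst (x m) = e \<and> x m \<noteq> x i0" "\<lambda>m. snd (x m)"] by blast
    define q where "q = snd (x mq)"
    have xmq: "x mq = (e, q)" using mq(2) by (simp add: q_def prod_eq_iff)
    have qr: "r < q"
    proof -
      have "r \<le> q" using rmin[OF mq(1)] by (simp add: q_def)
      moreover have "q \<noteq> r" using mq(2) xmq xi0 by auto
      ultimately show ?thesis by simp
    qed
    have q1: "q \<le> 1" using pt[OF mq(1)] by (simp add: q_def)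
    have qmin: "q \<le> snd (x m)" if "m < n" "fst (x m) = e" "x m \<noteq> x i0" for m
      using mq(3) that by (simp add: q_def)
    define be where "be = (r + q) / 2"
    show ?thesis
    proof (intro exI[of _ be] conjI allI impI)
      show "r \<le> be" "be \<le> 1" using qr q1 by (simp_all add: be_def)
      show "eint n x i0 e \<le> c * be"
      proof -
        have "eint n x i0 e \<le> c * (be - 0)"
        proof (rule eint_upper)
          show "0 \<le> be" "be \<le> 1" using qr q1 r0 by (simp_all add: be_def)
          show "share n x i0 (e, t) \<le> c" for t by (rule csh)
          fix t :: real assume t: "0 \<le> t" "t \<le> 1" "t < 0 \<or> be < t"
          have "star_dist (e,t) (x mq) < star_dist (e,t) (x i0)"
            using t qr by (auto simp: sdist2 xi0 xmq be_def abs_if)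
          then show "share n x i0 (e, t) \<le> 0" using share_zero[OF i0(1) mq(1)] by simp
        qed (use c0 in simp_all)
        then show ?thesis by simp
      qed
      show "eint n x0 i0 e \<ge> be - r/2" if "mp = 1"
      proof -
        have "eint n x0 i0 e \<ge> q/2 - 0"
        proof (rule eint_lower)
          show "q/2 \<le> 1" using q1 by simp
          fix t :: real assume t: "0 < t" "t < q/2"
          have "\<forall>m<n. m \<noteq> i0 \<longrightarrow> star_dist (e,t) center < star_dist (e,t) (x m)"
          proof (intro allI impI)
            fix m assume m: "m < n" "m \<noteq> i0"
            have xne: "x m \<noteq> x i0" using uniq[OF that m(1)] m(2) by auto
            show "star_dist (e,t) center < star_dist (e,t) (x m)"
            proof (cases "fst (x m) = e")
              case True
              then have "q \<le> snd (x m)" using qmin[OF m(1) True xne] by simp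
              then show ?thesis using True t e1 by (auto simp: sdist2 center_def abs_if)
            next
              case False
              then show ?thesis using pt[OF m(1)] t e1 by (auto simp: sdist2 center_def)
            qed
          qed
          then show "1 \<le> share n x0 i0 (e, t)" unfolding x0_def using share_dev_one[OF i0(1)] by simp
        qed simp
        moreover have "be - r/2 = q/2" by (simp add: be_def field_simps)
        ultimately show ?thesis by simp
      qed
      show "eint n x0 i0 e \<ge> 1" if "mp = 1" "\<not> Qex" using that True by simp
      fix \<epsilon> :: real assume ep: "0 < \<epsilon>" "r + \<epsilon> \<le> 1"
      show "eint n (x(i0 := (e, r+\<epsilon>))) i0 e \<ge> be - (r + \<epsilon>)"
      proof (rule eint_lower)
        show "0 \<le> r + \<epsilon>" using r0 ep by simp
        show "be \<le> 1" using qr q1 by (simp add: be_def)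
        fix t :: real assume t: "r + \<epsilon> < t" "t < be"
        have "\<forall>m<n. m \<noteq> i0 \<longrightarrow> star_dist (e,t) (e, r+\<epsilon>) < star_dist (e,t) (x m)"
        proof (intro allI impI)
          fix m assume m: "m < n" "m \<noteq> i0"
          show "star_dist (e,t) (e, r+\<epsilon>) < star_dist (e,t) (x m)"
          proof (cases "fst (x m) = e")
            case True
            show ?thesis
            proof (cases "x m = x i0")
              case True
              then show ?thesis using t ep by (auto simp: sdist2 xi0 abs_if)
            next
              case False
              then have "q \<le> snd (x m)" using qmin[OF m(1) \<open>fst (x m) = e\<close>] by simp
              then show ?thesis using \<open>fst (x m) = e\<close> t ep by (auto simp: sdist2 be_def abs_if)
            qed
          next
            case False
            then show ?thesis using pt[OF m(1)] t ep r0 by (auto simp: sdist2 abs_if)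
          qed
        qed
        then show "1 \<le> share n (x(i0 := (e, r+\<epsilon>))) i0 (e, t)" using share_dev_one[OF i0(1)] by simp
      qed
    qed
  next
    case False
    then have noQ: "\<forall>m<n. fst (x m) = e \<longrightarrow> x m = x i0" by (auto simp: Qex_def)
    show ?thesis
    proof (intro exI[of _ 1] conjI allI impI)
      show "r \<le> 1" "(1::real) \<le> 1" using r0 by simp_all
      show "eint n x i0 e \<le> c * 1" using piM[of e] by simp
      show D1: "eint n x0 i0 e \<ge> 1" if "mp = 1" "\<not> Qex"
      proof -
        have "eint n x0 i0 e \<ge> 1 - 0"
        proof (rule eint_lower)
          fix t :: real assume t: "0 < t" "t < 1"
          have "\<forall>m<n. m \<noteq> i0 \<longrightarrow> star_dist (e,t) center < star_dist (e,t) (x m)"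
          proof (intro allI impI)
            fix m assume m: "m < n" "m \<noteq> i0"
            have "fst (x m) \<noteq> e" using noQ uniq[OF that(1) m(1)] m by auto
            then show "star_dist (e,t) center < star_dist (e,t) (x m)"
              using pt[OF m(1)] t e1 by (auto simp: sdist2 center_def)
          qed
          then show "1 \<le> share n x0 i0 (e, t)" unfolding x0_def using share_dev_one[OF i0(1)] by simp
        qed simp_all
        then show ?thesis by simp
      qed
      show "eint n x0 i0 e \<ge> 1 - r/2" if "mp = 1" using D1[OF that False] r0 by simp
      fix \<epsilon> :: real assume ep: "0 < \<epsilon>" "r + \<epsilon> \<le> 1"
      show "eint n (x(i0 := (e, r+\<epsilon>))) i0 e \<ge> 1 - (r + \<epsilon>)"
      proof (rule eint_lower)
        show "0 \<le> r + \<epsilon>" using r0 ep by simp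
        fix t :: real assume t: "r + \<epsilon> < t" "t < 1"
        have "\<forall>m<n. m \<noteq> i0 \<longrightarrow> star_dist (e,t) (e, r+\<epsilon>) < star_dist (e,t) (x m)"
        proof (intro allI impI)
          fix m assume m: "m < n" "m \<noteq> i0"
          show "star_dist (e,t) (e, r+\<epsilon>) < star_dist (e,t) (x m)"
          proof (cases "fst (x m) = e")
            case True
            then have "x m = x i0" using noQ m by auto
            then show ?thesis using t ep by (auto simp: sdist2 xi0 abs_if)
          next
            case False
            then show ?thesis using pt[OF m(1)] t ep r0 by (auto simp: sdist2 abs_if)
          qed
        qed
        then show "1 \<le> share n (x(i0 := (e, r+\<epsilon>))) i0 (e, t)" using share_dev_one[OF i0(1)] by simp
      qed simp
    qed
  qed
  then obtain be where be: "r \<le> be" "be \<le> 1" "eint n x i0 e \<le> c * be"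
    "mp = 1 \<Longrightarrow> eint n x0 i0 e \<ge> be - r/2"
    "mp = 1 \<Longrightarrow> \<not> Qex \<Longrightarrow> eint n x0 i0 e \<ge> 1"
    "\<And>\<epsilon>. 0 < \<epsilon> \<Longrightarrow> r + \<epsilon> \<le> 1 \<Longrightarrow> eint n (x(i0 := (e, r+\<epsilon>))) i0 e \<ge> be - (r + \<epsilon>)"
    by blast

  have sumD: "payoff k n x0 i0 - payoff k n x i0 = (\<Sum>j=1..k. eint n x0 i0 j - eint n x i0 j)"
    by (simp add: payoff_eint sum_subtractf)

  show False
  proof (cases "mp = 1")
    case mp_one: True
    have c1: "c = 1" using mp_one by (simp add: c_def)
    show False
    proof (cases "\<exists>j0\<in>{1..k}. j0 \<noteq> e \<and> (\<forall>m<n. fst (x m) \<noteq> j0)")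
      case True
      then obtain j0 where j0: "j0 \<in> {1..k}" "j0 \<noteq> e" "\<forall>m<n. fst (x m) \<noteq> j0" by blast
      show False
      proof (cases Qex)
        case True
        then obtain mq where mq: "mq < n" "fst (x mq) = e" "x mq \<noteq> x i0" by (auto simp: Qex_def)
        define q where "q = snd (x mq)"
        have xmq: "x mq = (e, q)" using mq(2) by (simp add: q_def prod_eq_iff)
        have qr: "r < q"
        proof -
          have "r \<le> q" using rmin[OF mq(1)] by (simp add: q_def)
          moreover have "q \<noteq> r" using mq(3) xmq xi0 by auto
          ultimately show ?thesis by simp
        qed
        define xq where "xq = x(mq := center)"
        have up: "payoff k n x mq \<le> 1 - (r + q)/2"
        proof -
          have "payoff k n x mq \<le> eint n x mq e"
            unfolding payoff_eint
          proof (rule sum_upper1[OF ek])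
            fix j assume j: "j \<in> {1..k}" "j \<noteq> e"
            show "eint n x mq j \<le> 0"
            proof (rule eint_zero)
              fix t :: real assume "0 \<le> t" "t \<le> 1"
              have "star_dist (j,t) (x i0) < star_dist (j,t) (x mq)"
                using j qr by (simp add: sdist2 xi0 xmq)
              then show "share n x mq (j, t) \<le> 0" using share_zero[OF mq(1) i0(1)] by simp
            qed
          qed
          also have "eint n x mq e \<le> 1 * (1 - (r + q)/2)"
          proof (rule eint_upper)
            show "0 \<le> (r + q)/2" "(r+q)/2 \<le> 1" using r0 qr pt[OF mq(1)] by (simp_all add: q_def)
            show "share n x mq (e, t) \<le> 1" for t by (rule share_le1g)
            fix t :: real assume t: "0 \<le> t" "t \<le> 1" "t < (r + q)/2 \<or> 1 < t"
            have "star_dist (e,t) (x i0) < star_dist (e,t) (x mq)"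
              using t qr by (auto simp: sdist2 xi0 xmq abs_if)
            then show "share n x mq (e, t) \<le> 0" using share_zero[OF mq(1) i0(1)] by simp
          qed simp_all
          finally show ?thesis by simp
        qed
        have lo: "payoff k n xq mq \<ge> 1"
        proof -
          have "eint n xq mq j0 \<le> payoff k n xq mq"
            unfolding payoff_eint by (rule sum_ge1[OF j0(1)]) (rule eint_nonneg)
          moreover have "eint n xq mq j0 \<ge> 1 - 0"
          proof (rule eint_lower)
            fix t :: real assume t: "0 < t" "t < 1"
            have "\<forall>m<n. m \<noteq> mq \<longrightarrow> star_dist (j0,t) center < star_dist (j0,t) (x m)"
              using j0 pt t by (auto simp: sdist2 center_def)
            then show "1 \<le> share n xq mq (j0, t)" unfolding xq_def using share_dev_one[OF mq(1)] by simp
          qed simp_all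
          ultimately show ?thesis by simp
        qed
        have "payoff k n xq mq \<le> payoff k n x mq"
          unfolding xq_def by (rule ne_dev[OF ne mq(1) center_pt])
        then show False using up lo qr r0 by argo
      next
        case False
        define i' where "i' = (if i0 = 0 then 1 else (0::nat))"
        have i': "i' < n" "i' \<noteq> i0" using n2 by (auto simp: i'_def)
        have "x i' \<noteq> x i0" using uniq[OF mp_one i'(1)] i'(2) by auto
        then have fe: "fst (x i') \<noteq> e" using False i'(1) by (auto simp: Qex_def)
        define e' where "e' = fst (x i')"
        have e'k: "e' \<in> {1..k}" using pt[OF i'(1)] by (simp add: e'_def)
        have ge: "(eint n x0 i0 e - eint n x i0 e) + (eint n x0 i0 e' - eint n x i0 e') \<le>
            (\<Sum>j=1..k. eint n x0 i0 j - eint n x i0 j)"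
        proof (rule sum_ge2[OF ek e'k])
          show "e \<noteq> e'" using fe by (simp add: e'_def)
          fix j assume "j \<in> {1..k}" "j \<notin> {e, e'}"
          then show "0 \<le> eint n x0 i0 j - eint n x i0 j" using G[of j] by auto
        qed
        have t1: "eint n x0 i0 e - eint n x i0 e \<ge> 0" using be(5)[OF mp_one False] piM[of e] c1 by simp
        have t2: "eint n x0 i0 e' - eint n x i0 e' \<ge> r/2"
          using G[OF e'k] fe i'(1) by (auto simp: e'_def)
        show False using ge t1 t2 sumD Dle r0 by argo
      qed
    next
      case False
      then have allne: "\<forall>j\<in>{1..k}. j \<noteq> e \<longrightarrow> (\<exists>m<n. fst (x m) = j)" by blast
      obtain j1 j2 where js: "j1 \<in> {1..k}" "j2 \<in> {1..k}" "e \<noteq> j1" "e \<noteq> j2" "j1 \<noteq> j2"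
        using two_others[OF k3 ek] by blast
      have ge: "(eint n x0 i0 e - eint n x i0 e) + (eint n x0 i0 j1 - eint n x i0 j1) + (eint n x0 i0 j2 - eint n x i0 j2) \<le>
            (\<Sum>j=1..k. eint n x0 i0 j - eint n x i0 j)"
      proof (rule sum_ge3[OF ek js])
        fix j assume "j \<in> {1..k}" "j \<notin> {e, j1, j2}"
        then show "0 \<le> eint n x0 i0 j - eint n x i0 j" using G[of j] by auto
      qed
      have t1: "eint n x0 i0 e - eint n x i0 e \<ge> - r/2" using be(3) be(4)[OF mp_one] c1 by simp
      have t2: "eint n x0 i0 j1 - eint n x i0 j1 \<ge> r/2" using G[of j1] allne js by auto
      have t3: "eint n x0 i0 j2 - eint n x i0 j2 \<ge> r/2" using G[of j2] allne js by auto
      show False using ge t1 t2 t3 sumD Dle r0 by argo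
    qed
  next
    case mp2: False
    then have mp2: "mp \<ge> 2" using mp1 by simp
    have ch: "c = 1/2" using mp2 by (simp add: c_def)
    show False
    proof (cases "\<exists>j0\<in>{1..k}. j0 \<noteq> e \<and> (\<forall>m<n. fst (x m) \<noteq> j0)")
      case True
      then obtain j0 where j0: "j0 \<in> {1..k}" "j0 \<noteq> e" "\<forall>m<n. fst (x m) \<noteq> j0" by blast
      have ge: "(eint n x0 i0 e - eint n x i0 e) + (eint n x0 i0 j0 - eint n x i0 j0) \<le>
            (\<Sum>j=1..k. eint n x0 i0 j - eint n x i0 j)"
      proof (rule sum_ge2[OF ek j0(1)])
        show "e \<noteq> j0" using j0 by simp
        fix j assume "j \<in> {1..k}" "j \<notin> {e, j0}"
        then show "0 \<le> eint n x0 i0 j - eint n x i0 j" using G[of j] by auto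
      qed
      have t1: "eint n x0 i0 e - eint n x i0 e \<ge> r/2 - 1/2" using De_gen piM[of e] ch by simp
      have t2: "eint n x0 i0 j0 - eint n x i0 j0 \<ge> 1/2" using DM[OF j0(1,3)] piM[of j0] ch by simp
      show False using ge t1 t2 sumD Dle r0 by argo
    next
      case False
      then have allne: "\<forall>j\<in>{1..k}. j \<noteq> e \<longrightarrow> (\<exists>m<n. fst (x m) = j)" by blast
      obtain j1 j2 where js: "j1 \<in> {1..k}" "j2 \<in> {1..k}" "e \<noteq> j1" "e \<noteq> j2" "j1 \<noteq> j2"
        using two_others[OF k3 ek] by blast
      show False
      proof (cases "r = 1")
        case True
        have ge: "(eint n x0 i0 e - eint n x i0 e) + (eint n x0 i0 j1 - eint n x i0 j1) + (eint n x0 i0 j2 - eint n x i0 j2) \<le>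
              (\<Sum>j=1..k. eint n x0 i0 j - eint n x i0 j)"
        proof (rule sum_ge3[OF ek js])
          fix j assume "j \<in> {1..k}" "j \<notin> {e, j1, j2}"
          then show "0 \<le> eint n x0 i0 j - eint n x i0 j" using G[of j] by auto
        qed
        have t1: "eint n x0 i0 e - eint n x i0 e \<ge> 0" using De_gen piM[of e] ch True by simp
        have t2: "eint n x0 i0 j1 - eint n x i0 j1 \<ge> 0" using G[of j1] js by auto
        have t3: "eint n x0 i0 j2 - eint n x i0 j2 \<ge> r/4"
          using G[of j2] allne js mp2 eint_nonneg[of n x0 i0 j2] eint_nonneg[of n x i0 j2] by auto
        show False using ge t1 t2 t3 sumD Dle r0 by argo
      next
        case False
        then have r1: "r < 1" using r0 by simp
        define \<epsilon> where "\<epsilon> = min (r/4) (1 - r)"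
        have ep3: "\<epsilon> \<le> r/4" unfolding \<epsilon>_def by (rule min.cobounded1)
        have ep: "0 < \<epsilon>" "r + \<epsilon> \<le> 1" "\<epsilon> \<le> r/4" using r0 r1 ep3 by (auto simp: \<epsilon>_def)
        define x1 where "x1 = x(i0 := (e, r + \<epsilon>))"
        have Ole: "payoff k n x1 i0 \<le> payoff k n x i0"
          unfolding x1_def by (rule ne_dev[OF ne i0(1) edge_pt]) (use e1 r0 ep in auto)
        have sumO: "payoff k n x0 i0 + payoff k n x1 i0 - 2 * payoff k n x i0
            = (\<Sum>j=1..k. eint n x0 i0 j + eint n x1 i0 j - 2 * eint n x i0 j)"
          by (simp add: payoff_eint sum_subtractf sum.distrib sum_distrib_left)
        have ge: "(eint n x0 i0 e + eint n x1 i0 e - 2 * eint n x i0 e) + (eint n x0 i0 j1 + eint n x1 i0 j1 - 2 * eint n x i0 j1)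
           + (eint n x0 i0 j2 + eint n x1 i0 j2 - 2 * eint n x i0 j2) \<le>
              (\<Sum>j=1..k. eint n x0 i0 j + eint n x1 i0 j - 2 * eint n x i0 j)"
        proof (rule sum_ge3[OF ek js])
          fix j assume "j \<in> {1..k}" "j \<notin> {e, j1, j2}"
          then show "0 \<le> eint n x0 i0 j + eint n x1 i0 j - 2 * eint n x i0 j"
            using G[of j] mp2 eint_nonneg[of n x1 i0 j] by auto
        qed
        have t1: "eint n x0 i0 e + eint n x1 i0 e - 2 * eint n x i0 e \<ge> - r/2 - \<epsilon>"
          using De_gen be(3) be(6)[OF ep(1,2)] ch unfolding x1_def by simp
        have t2: "eint n x0 i0 j1 + eint n x1 i0 j1 - 2 * eint n x i0 j1 \<ge> r/2"
          using G[of j1] allne js mp2 eint_nonneg[of n x1 i0 j1] by auto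
        have t3: "eint n x0 i0 j2 + eint n x1 i0 j2 - 2 * eint n x i0 j2 \<ge> r/2"
          using G[of j2] allne js mp2 eint_nonneg[of n x1 i0 j2] by auto
        show False using ge t1 t2 t3 sumO Dle Ole r0 ep by argo
      qed
    qed
  qed
qed



lemma pt_cases: "star_pt k p \<Longrightarrow> p = center \<or> (1 \<le> fst p \<and> fst p \<le> k \<and> 0 < snd p \<and> snd p \<le> 1)"
  by (auto simp: star_pt_def)

lemma pt_edge: "star_pt k p \<Longrightarrow> 1 \<le> fst p \<Longrightarrow> fst p \<le> k \<and> 0 < snd p \<and> snd p \<le> 1 \<and> p = (fst p, snd p)"
  by (auto simp: star_pt_def center_def)

lemma pt_fst: "star_pt k p \<Longrightarrow> p \<noteq> center \<Longrightarrow> 1 \<le> fst p"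
  by (auto simp: star_pt_def)

lemma dist_c: "1 \<le> j \<Longrightarrow> star_dist (j,t) center = t"
  by (simp add: star_dist_def center_def)

lemma inner_nb:
  fixes n k e :: nat and x :: "nat \<Rightarrow> spt"
  assumes pts: "\<forall>m<n. star_pt k (x m)" and ic: "ic < n" "x ic = center" and e: "1 \<le> e" and s: "0 < s"
  shows "\<exists>u mu. 0 \<le> u \<and> u < s \<and> mu < n \<and> (\<forall>t\<ge>0. star_dist (e,t) (x mu) = \<bar>t - u\<bar>)
           \<and> (\<forall>m<n. fst (x m) = e \<longrightarrow> snd (x m) < s \<longrightarrow> snd (x m) \<le> u)"
proof (cases "\<exists>m<n. fst (x m) = e \<and> snd (x m) < s")
  case True
  then obtain mu where mu: "mu < n" "fst (x mu) = e \<and> snd (x mu) < s"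
      "\<forall>m<n. fst (x m) = e \<and> snd (x m) < s \<longrightarrow> snd (x m) \<le> snd (x mu)"
    using ex_max_pl[of n "\<lambda>m. fst (x m) = e \<and> snd (x m) < s" "\<lambda>m. snd (x m)"] by blast
  have "0 < snd (x mu)" using pt_edge[of k "x mu"] pts mu e by auto
  then show ?thesis using mu by (intro exI[of _ "snd (x mu)"] exI[of _ mu]) (auto simp: sdist2)
next
  case False
  then show ?thesis using ic e s by (intro exI[of _ 0] exI[of _ ic]) (auto simp: dist_c)
qed

lemma partB:
  fixes k n :: nat and x :: "nat \<Rightarrow> spt"
  assumes k3: "k \<ge> 3" and n2: "n \<ge> 2" and ne: "nash_eq k n x"
    and p: "star_pt k p" "p \<noteq> center"
  shows "card {i \<in> {..<n}. x i = p} \<le> 2"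
proof (rule ccontr)
  assume "\<not> ?thesis"
  then have c3: "card {i \<in> {..<n}. x i = p} \<ge> 3" by simp
  have "{i \<in> {..<n}. x i = p} \<noteq> {}"
  proof
    assume h: "{i \<in> {..<n}. x i = p} = {}"
    have "card {i \<in> {..<n}. x i = p} = 0" by (simp only: h card.empty)
    then show False using c3 by linarith
  qed
  then obtain i1 where i1: "i1 < n" "x i1 = p" by auto
  obtain ic where ic: "ic < n" "x ic = center" using partA[OF k3 n2 ne] by blast
  have pts: "\<forall>m<n. star_pt k (x m)" using ne by (simp add: nash_eq_def)
  define e where "e = fst p"
  define s where "s = snd p"
  have e1: "1 \<le> e" using pt_fst[OF p] by (simp add: e_def)
  have es: "e \<le> k" "0 < s" "s \<le> 1" "p = (e,s)" using pt_edge[OF p(1)] e1 by (auto simp: e_def s_def)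
  have xi1: "x i1 = (e,s)" using i1 es by simp
  define mp where "mp = card {m\<in>{..<n}. x m = x i1}"
  have mp3: "mp \<ge> 3" using c3 i1 by (simp add: mp_def)
  have sh: "share n x i1 y \<le> 1/3" for y
  proof -
    have "1 / real mp \<le> 1/3" using mp3 by (simp add: divide_simps)
    then show ?thesis using share_le[OF i1(1), of x y] by (simp add: mp_def)
  qed
  have ptm: "x m = center \<or> (1 \<le> fst (x m) \<and> fst (x m) \<le> k \<and> 0 < snd (x m) \<and> snd (x m) \<le> 1)" if "m < n" for m
    using pt_cases pts that by blast
  obtain u mu where u: "0 \<le> u" "u < s" "mu < n" "\<forall>t\<ge>0. star_dist (e,t) (x mu) = \<bar>t - u\<bar>"
    "\<forall>m<n. fst (x m) = e \<longrightarrow> snd (x m) < s \<longrightarrow> snd (x m) \<le> u"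
    using inner_nb[OF pts ic e1 es(2)] by blast
  define \<alpha> where "\<alpha> = (u + s)/2"
  have Q: "\<exists>\<beta>. s \<le> \<beta> \<and> \<beta> \<le> 1 \<and> (\<forall>t. 0 \<le> t \<longrightarrow> t \<le> 1 \<longrightarrow> \<beta> < t \<longrightarrow> share n x i1 (e,t) \<le> 0)
      \<and> (\<forall>m<n. fst (x m) = e \<longrightarrow> s < snd (x m) \<longrightarrow> 2 * \<beta> - s \<le> snd (x m))"
  proof (cases "\<exists>m<n. fst (x m) = e \<and> s < snd (x m)")
    case True
    then obtain mq where mq: "mq < n" "fst (x mq) = e \<and> s < snd (x mq)"
        "\<forall>m<n. fst (x m) = e \<and> s < snd (x m) \<longrightarrow> snd (x mq) \<le> snd (x m)"
      using ex_min_pl[of n "\<lambda>m. fst (x m) = e \<and> s < snd (x m)" "\<lambda>m. snd (x m)"] by blast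
    define q where "q = snd (x mq)"
    have xmq: "x mq = (e, q)" using mq(2) by (simp add: q_def prod_eq_iff)
    have q1: "q \<le> 1" using ptm[OF mq(1)] mq(2) e1 by (auto simp: q_def center_def)
    have sq: "s < q" using mq(2) by (simp add: q_def)
    show ?thesis
    proof (intro exI[of _ "(s+q)/2"] conjI allI impI)
      show "s \<le> (s+q)/2" "(s+q)/2 \<le> 1" using mq(2) q1 es by (simp_all add: q_def)
      fix t :: real assume t: "0 \<le> t" "t \<le> 1" "(s + q) / 2 < t"
      have "star_dist (e,t) (x mq) < star_dist (e,t) (x i1)"
        using t sq by (auto simp: sdist2 xi1 xmq abs_if)
      then show "share n x i1 (e, t) \<le> 0" using share_zero[OF i1(1) mq(1)] by simp
    next
      fix m assume m: "m < n" "fst (x m) = e" "s < snd (x m)"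
      have "q \<le> snd (x m)" using mq(3) m by (simp add: q_def)
      moreover have "2 * ((s + q) / 2) - s = q" by argo
      ultimately show "2 * ((s + q) / 2) - s \<le> snd (x m)" by simp
    qed
  next
    case False
    show ?thesis
      by (intro exI[of _ 1] conjI allI impI) (use es False in auto)
  qed
  then obtain \<beta> where \<beta>: "s \<le> \<beta>" "\<beta> \<le> 1" "\<And>t. 0 \<le> t \<Longrightarrow> t \<le> 1 \<Longrightarrow> \<beta> < t \<Longrightarrow> share n x i1 (e,t) \<le> 0"
      "\<And>m. m < n \<Longrightarrow> fst (x m) = e \<Longrightarrow> s < snd (x m) \<Longrightarrow> 2 * \<beta> - s \<le> snd (x m)"
    by blast
  have ab: "\<alpha> < \<beta>" using u \<beta> by (simp add: \<alpha>_def)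
  have a0: "0 \<le> \<alpha>" using u es by (simp add: \<alpha>_def)
  have up: "payoff k n x i1 \<le> (\<beta> - \<alpha>) / 3"
  proof -
    have "payoff k n x i1 \<le> eint n x i1 e"
      unfolding payoff_eint
    proof (rule sum_upper1)
      show "e \<in> {1..k}" using e1 es by simp
      fix j assume j: "j \<in> {1..k}" "j \<noteq> e"
      show "eint n x i1 j \<le> 0"
      proof (rule eint_zero)
        fix t :: real assume "0 \<le> t" "t \<le> 1"
        have "star_dist (j,t) (x ic) < star_dist (j,t) (x i1)"
          using j es by (simp add: ic(2) xi1 sdist2 center_def)
        then show "share n x i1 (j, t) \<le> 0" using share_zero[OF i1(1) ic(1)] by simp
      qed
    qed
    also have "eint n x i1 e \<le> 1/3 * (\<beta> - \<alpha>)"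
    proof (rule eint_upper)
      show "0 \<le> \<alpha>" "\<alpha> \<le> \<beta>" "\<beta> \<le> 1" using a0 ab \<beta> by simp_all
      show "share n x i1 (e, t) \<le> 1/3" for t by (rule sh)
      fix t :: real assume t: "0 \<le> t" "t \<le> 1" "t < \<alpha> \<or> \<beta> < t"
      show "share n x i1 (e, t) \<le> 0"
      proof (cases "t < \<alpha>")
        case True
        have "star_dist (e,t) (x mu) < star_dist (e,t) (x i1)"
          using u(4) t True u(1,2) by (auto simp: xi1 sdist2 \<alpha>_def abs_if)
        then show ?thesis using share_zero[OF i1(1) u(3)] by simp
      next
        case False
        then show ?thesis using t \<beta>(3) by auto
      qed
    qed simp
    finally show ?thesis by simp
  qed
  have inward: "payoff k n x i1 \<ge> (s - \<epsilon>) - \<alpha>" if ep: "0 < \<epsilon>" "\<epsilon> \<le> s/2" for \<epsilon>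
  proof -
    define y where "y = x(i1 := (e, s - \<epsilon>))"
    have "payoff k n y i1 \<le> payoff k n x i1"
      unfolding y_def by (rule ne_dev[OF ne i1(1) edge_pt]) (use e1 es ep in auto)
    moreover have "eint n y i1 e \<le> payoff k n y i1"
      unfolding payoff_eint by (rule sum_ge1) (use e1 es eint_nonneg in auto)
    moreover have "eint n y i1 e \<ge> (s - \<epsilon>) - \<alpha>"
    proof (rule eint_lower)
      show "0 \<le> \<alpha>" by (rule a0)
      show "s - \<epsilon> \<le> 1" using es ep by simp
      fix t :: real assume t: "\<alpha> < t" "t < s - \<epsilon>"
      have "\<forall>m<n. m \<noteq> i1 \<longrightarrow> star_dist (e,t) (e, s - \<epsilon>) < star_dist (e,t) (x m)"
      proof (intro allI impI)
        fix m assume m: "m < n" "m \<noteq> i1"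
        have dd: "star_dist (e,t) (e, s - \<epsilon>) = s - \<epsilon> - t" using t by (simp add: sdist2)
        show "star_dist (e,t) (e, s - \<epsilon>) < star_dist (e,t) (x m)"
        proof (cases "x m = center")
          case True
          then show ?thesis using dd t ep u(1) e1 by (simp add: dist_c \<alpha>_def)
        next
          case False
          then have pm: "1 \<le> fst (x m)" "0 < snd (x m)" using ptm[OF m(1)] by auto
          show ?thesis
          proof (cases "fst (x m) = e")
            case True
            show ?thesis
            proof (cases "snd (x m) < s")
              case True
              then have "snd (x m) \<le> u" using u(5) m(1) \<open>fst (x m) = e\<close> by blast
              then show ?thesis using dd t ep \<open>fst (x m) = e\<close> by (auto simp: sdist2 \<alpha>_def abs_if)
            next
              case False
              then show ?thesis using dd t ep \<open>fst (x m) = e\<close> by (auto simp: sdist2 abs_if)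
            qed
          next
            case False
            then show ?thesis using dd t ep pm u(1) by (auto simp: sdist2 \<alpha>_def)
          qed
        qed
      qed
      then show "1 \<le> share n y i1 (e, t)" unfolding y_def using share_dev_one[OF i1(1)] by simp
    qed
    ultimately show ?thesis by simp
  qed
  have outward: "payoff k n x i1 \<ge> \<beta> - (s + \<epsilon>)" if ep: "0 < \<epsilon>" "s + \<epsilon> \<le> 1" for \<epsilon>
  proof -
    define y where "y = x(i1 := (e, s + \<epsilon>))"
    have "payoff k n y i1 \<le> payoff k n x i1"
      unfolding y_def by (rule ne_dev[OF ne i1(1) edge_pt]) (use e1 es ep in auto)
    moreover have "eint n y i1 e \<le> payoff k n y i1"
      unfolding payoff_eint by (rule sum_ge1) (use e1 es eint_nonneg in auto)
    moreover have "eint n y i1 e \<ge> \<beta> - (s + \<epsilon>)"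
    proof (rule eint_lower)
      show "0 \<le> s + \<epsilon>" using es ep by simp
      show "\<beta> \<le> 1" by (rule \<beta>(2))
      fix t :: real assume t: "s + \<epsilon> < t" "t < \<beta>"
      have "\<forall>m<n. m \<noteq> i1 \<longrightarrow> star_dist (e,t) (e, s + \<epsilon>) < star_dist (e,t) (x m)"
      proof (intro allI impI)
        fix m assume m: "m < n" "m \<noteq> i1"
        have dd: "star_dist (e,t) (e, s + \<epsilon>) = t - s - \<epsilon>" using t by (simp add: sdist2)
        show "star_dist (e,t) (e, s + \<epsilon>) < star_dist (e,t) (x m)"
        proof (cases "x m = center")
          case True
          then show ?thesis using dd t ep e1 es by (simp add: dist_c)
        next
          case False
          then have pm: "1 \<le> fst (x m)" "0 < snd (x m)" using ptm[OF m(1)] by auto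
          show ?thesis
          proof (cases "fst (x m) = e")
            case True
            show ?thesis
            proof (cases "s < snd (x m)")
              case True
              then have "2 * \<beta> - s \<le> snd (x m)" using \<beta>(4) m(1) \<open>fst (x m) = e\<close> by blast
              then show ?thesis using dd t ep \<open>fst (x m) = e\<close> by (auto simp: sdist2 abs_if)
            next
              case False
              then show ?thesis using dd t ep \<open>fst (x m) = e\<close> by (auto simp: sdist2 abs_if)
            qed
          next
            case False
            then show ?thesis using dd t ep pm es by (auto simp: sdist2)
          qed
        qed
      qed
      then show "1 \<le> share n y i1 (e, t)" unfolding y_def using share_dev_one[OF i1(1)] by simp
    qed
    ultimately show ?thesis by simp
  qed
  show False
  proof (cases "s < 1")
    case True
    define \<epsilon> where "\<epsilon> = min (min (s/2) (1 - s)) ((\<beta> - \<alpha>)/12)"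
    have e1': "\<epsilon> \<le> s/2" unfolding \<epsilon>_def by (rule order_trans[OF min.cobounded1 min.cobounded1])
    have e2': "\<epsilon> \<le> 1 - s" unfolding \<epsilon>_def by (rule order_trans[OF min.cobounded1 min.cobounded2])
    have e3': "\<epsilon> \<le> (\<beta> - \<alpha>)/12" unfolding \<epsilon>_def by (rule min.cobounded2)
    have ep: "0 < \<epsilon>" "\<epsilon> \<le> s/2" "s + \<epsilon> \<le> 1" "\<epsilon> \<le> (\<beta> - \<alpha>)/12"
      using True es ab e1' e2' e3' by (auto simp: \<epsilon>_def)
    have "payoff k n x i1 \<ge> (s - \<epsilon>) - \<alpha>" using inward ep by simp
    moreover have "payoff k n x i1 \<ge> \<beta> - (s + \<epsilon>)" using outward ep by simp
    ultimately show False using up ep ab by argo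
  next
    case False
    then have s1: "s = 1" using es by simp
    then have b1: "\<beta> = 1" using \<beta> by simp
    define \<epsilon> where "\<epsilon> = min (s/2) ((\<beta> - \<alpha>)/12)"
    have e1': "\<epsilon> \<le> s/2" unfolding \<epsilon>_def by (rule min.cobounded1)
    have e3': "\<epsilon> \<le> (\<beta> - \<alpha>)/12" unfolding \<epsilon>_def by (rule min.cobounded2)
    have ep: "0 < \<epsilon>" "\<epsilon> \<le> s/2" "\<epsilon> \<le> (\<beta> - \<alpha>)/12"
      using es ab e1' e3' by (auto simp: \<epsilon>_def)
    have "payoff k n x i1 \<ge> (s - \<epsilon>) - \<alpha>" using inward ep by simp
    then show False using up ep ab s1 b1 by argo
  qed
qed



lemma partC:
  fixes k n :: nat and x :: "nat \<Rightarrow> spt"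
  assumes k3: "k \<ge> 3" and n2: "n \<ge> 2" and ne: "nash_eq k n x"
  shows "card {i \<in> {..<n}. x i = center} \<le> k"
proof (rule ccontr)
  assume "\<not> ?thesis"
  then have ck: "card {i \<in> {..<n}. x i = center} \<ge> k + 1" by simp
  obtain ic where ic: "ic < n" "x ic = center" using partA[OF k3 n2 ne] by blast
  have pts: "\<forall>m<n. star_pt k (x m)" using ne by (simp add: nash_eq_def)
  have ptm: "x m = center \<or> (1 \<le> fst (x m) \<and> fst (x m) \<le> k \<and> 0 < snd (x m) \<and> snd (x m) \<le> 1)" if "m < n" for m
    using pt_cases pts that by blast
  define mc where "mc = card {m\<in>{..<n}. x m = x ic}"
  have mck: "mc \<ge> k + 1" using ck ic by (simp add: mc_def)
  have M0: "real mc > 0" using mck by simp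
  have sh: "share n x ic y \<le> 1 / real mc" for y using share_le[OF ic(1)] by (simp add: mc_def)
  define \<pi> where "\<pi> = payoff k n x ic"
  have edge: "\<exists>\<beta>. 0 < \<beta> \<and> \<beta> \<le> 1 \<and> eint n x ic j \<le> (1 / real mc) * \<beta> \<and> (\<forall>\<epsilon>. 0 < \<epsilon> \<longrightarrow> \<epsilon> \<le> 1 \<longrightarrow> \<beta> - \<epsilon> \<le> \<pi>)"
    if j: "j \<in> {1..k}" for j
  proof -
    have dev: "\<beta> - \<epsilon> \<le> \<pi>"
      if b: "\<beta> \<le> 1" and ep: "0 < \<epsilon>" "\<epsilon> \<le> 1"
        and cl: "\<And>t m. \<epsilon> < t \<Longrightarrow> t < \<beta> \<Longrightarrow> m < n \<Longrightarrow> m \<noteq> ic \<Longrightarrow> star_dist (j,t) (j,\<epsilon>) < star_dist (j,t) (x m)"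
      for \<beta> \<epsilon>
    proof -
      define y where "y = x(ic := (j, \<epsilon>))"
      have "payoff k n y ic \<le> payoff k n x ic"
        unfolding y_def by (rule ne_dev[OF ne ic(1) edge_pt]) (use j ep in auto)
      moreover have "eint n y ic j \<le> payoff k n y ic"
        unfolding payoff_eint by (rule sum_ge1[OF j]) (rule eint_nonneg)
      moreover have "eint n y ic j \<ge> \<beta> - \<epsilon>"
      proof (rule eint_lower)
        fix t :: real assume t: "\<epsilon> < t" "t < \<beta>"
        have "\<forall>m<n. m \<noteq> ic \<longrightarrow> star_dist (j,t) (j, \<epsilon>) < star_dist (j,t) (x m)"
          using cl t by blast
        then show "1 \<le> share n y ic (j, t)" unfolding y_def using share_dev_one[OF ic(1)] by simp
      qed (use b ep in auto)
      ultimately show ?thesis by (simp add: \<pi>_def)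
    qed
    show ?thesis
    proof (cases "\<exists>m<n. fst (x m) = j")
      case True
      then obtain mj where mj: "mj < n" "fst (x mj) = j" "\<forall>m<n. fst (x m) = j \<longrightarrow> snd (x mj) \<le> snd (x m)"
        using ex_min_pl[of n "\<lambda>m. fst (x m) = j" "\<lambda>m. snd (x m)"] by blast
      define \<rho> where "\<rho> = snd (x mj)"
      have xmj: "x mj = (j, \<rho>)" using mj(2) by (simp add: \<rho>_def prod_eq_iff)
      have r: "0 < \<rho>" "\<rho> \<le> 1" using ptm[OF mj(1)] mj(2) j by (auto simp: \<rho>_def center_def)
      have rmin: "\<rho> \<le> snd (x m)" if "m < n" "fst (x m) = j" for m using mj(3) that by (simp add: \<rho>_def)
      show ?thesis
      proof (intro exI[of _ "\<rho>/2"] conjI allI impI)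
        show "0 < \<rho>/2" "\<rho>/2 \<le> 1" using r by simp_all
        have "eint n x ic j \<le> (1 / real mc) * (\<rho>/2 - 0)"
        proof (rule eint_upper)
          show "0 \<le> \<rho>/2" "\<rho>/2 \<le> 1" using r by simp_all
          show "share n x ic (j, t) \<le> 1 / real mc" for t by (rule sh)
          fix t :: real assume t: "0 \<le> t" "t \<le> 1" "t < 0 \<or> \<rho>/2 < t"
          have "star_dist (j,t) (x mj) < star_dist (j,t) (x ic)"
            using t j r by (auto simp: sdist2 xmj ic(2) center_def abs_if)
          then show "share n x ic (j, t) \<le> 0" using share_zero[OF ic(1) mj(1)] by simp
        qed simp_all
        then show "eint n x ic j \<le> (1 / real mc) * (\<rho>/2)" by simp
        fix \<epsilon> :: real assume ep: "0 < \<epsilon>" "\<epsilon> \<le> 1"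
        show "\<rho>/2 - \<epsilon> \<le> \<pi>"
        proof (rule dev)
          show "\<rho>/2 \<le> 1" using r by simp
          fix t m assume t: "\<epsilon> < t" "t < \<rho>/2" and m: "m < n" "m \<noteq> ic"
          have dd: "star_dist (j,t) (j, \<epsilon>) = t - \<epsilon>" using t by (simp add: sdist2)
          show "star_dist (j,t) (j, \<epsilon>) < star_dist (j,t) (x m)"
          proof (cases "x m = center")
            case True then show ?thesis using dd j ep by (simp add: sdist2 center_def)
          next
            case False
            then have pm: "0 < snd (x m)" using ptm[OF m(1)] by auto
            show ?thesis
            proof (cases "fst (x m) = j")
              case True
              then have "\<rho> \<le> snd (x m)" using rmin m(1) by simp
              then show ?thesis using dd t ep True by (auto simp: sdist2 abs_if)
            next
              case False
              then show ?thesis using dd t ep pm by (auto simp: sdist2)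
            qed
          qed
        qed (use ep in auto)
      qed
    next
      case False
      show ?thesis
      proof (intro exI[of _ 1] conjI allI impI)
        have "eint n x ic j \<le> (1 / real mc) * (1 - 0)"
          by (rule eint_upper) (use sh in auto)
        then show "eint n x ic j \<le> (1 / real mc) * 1" by simp
        fix \<epsilon> :: real assume ep: "0 < \<epsilon>" "\<epsilon> \<le> 1"
        show "1 - \<epsilon> \<le> \<pi>"
        proof (rule dev)
          fix t m assume t: "\<epsilon> < t" "t < 1" and m: "m < n" "m \<noteq> ic"
          have dd: "star_dist (j,t) (j, \<epsilon>) = t - \<epsilon>" using t by (simp add: sdist2)
          show "star_dist (j,t) (j, \<epsilon>) < star_dist (j,t) (x m)"
          proof (cases "x m = center")
            case True then show ?thesis using dd j ep by (simp add: sdist2 center_def)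
          next
            case c: False
            then have pm: "0 < snd (x m)" using ptm[OF m(1)] by auto
            have "fst (x m) \<noteq> j" using False m(1) by blast
            then show ?thesis using dd t ep pm by (auto simp: sdist2)
          qed
        qed (use ep in auto)
      qed simp_all
    qed
  qed
  have k1: "1 \<in> {1..k}" using k3 by simp
  obtain \<beta>1 where b1: "0 < \<beta>1" "\<beta>1 \<le> 1" "\<And>\<epsilon>. 0 < \<epsilon> \<Longrightarrow> \<epsilon> \<le> 1 \<Longrightarrow> \<beta>1 - \<epsilon> \<le> \<pi>"
    using edge[OF k1] by blast
  define K where "K = real k"
  have K0: "K \<ge> 3" using k3 by (simp add: K_def)
  define \<epsilon> where "\<epsilon> = \<beta>1 / (2 * (K + 1))"
  have ep0: "0 < \<epsilon>" using b1 K0 by (simp add: \<epsilon>_def)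
  have ep1: "\<epsilon> \<le> 1"
  proof -
    have "\<beta>1 \<le> 2 * (K + 1)" using b1 K0 by simp
    then show ?thesis using K0 by (simp add: \<epsilon>_def divide_simps)
  qed
  have epK: "(K + 1) * \<epsilon> = \<beta>1 / 2" using K0 by (simp add: \<epsilon>_def field_simps)
  have per: "eint n x ic j \<le> (\<pi> + \<epsilon>) / real mc" if jj: "j \<in> {1..k}" for j
  proof -
    obtain \<beta> where b: "0 < \<beta>" "eint n x ic j \<le> (1 / real mc) * \<beta>" "\<beta> - \<epsilon> \<le> \<pi>"
      using edge[OF jj] ep0 ep1 by blast
    have "(1 / real mc) * \<beta> \<le> (1 / real mc) * (\<pi> + \<epsilon>)"
      using b(3) M0 by (intro mult_left_mono) auto
    then show ?thesis using b(2) by simp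
  qed
  have h1: "\<pi> \<le> K * ((\<pi> + \<epsilon>) / real mc)"
  proof -
    have "\<pi> = (\<Sum>j=1..k. eint n x ic j)" by (simp add: \<pi>_def payoff_eint)
    also have "\<dots> \<le> of_nat (card {1..k}) * ((\<pi> + \<epsilon>) / real mc)"
      by (rule sum_bounded_above) (rule per)
    finally show ?thesis by (simp add: K_def)
  qed
  have pi0: "\<pi> \<ge> 0" unfolding \<pi>_def payoff_eint by (rule sum_nonneg) (rule eint_nonneg)
  have h2: "\<pi> * real mc \<le> K * (\<pi> + \<epsilon>)"
  proof -
    have "\<pi> \<le> (K * (\<pi> + \<epsilon>)) / real mc" using h1 by simp
    then show ?thesis using M0 by (simp add: pos_le_divide_eq)
  qed
  have h3: "\<pi> * (K + 1) \<le> \<pi> * real mc"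
    using mck pi0 by (intro mult_left_mono) (auto simp: K_def)
  have h4: "\<pi> \<le> K * \<epsilon>" using h2 h3 by (simp add: algebra_simps)
  have h5: "\<beta>1 - \<epsilon> \<le> \<pi>" using b1(3)[OF ep0 ep1] .
  have "\<beta>1 \<le> (K + 1) * \<epsilon>" using h4 h5 by (simp add: algebra_simps)
  then show False using epK b1(1) by argo
qed

lemma partD:
  fixes k n :: nat and x :: "nat \<Rightarrow> spt"
  assumes k3: "k \<ge> 3" and n2: "n \<ge> 2" and ne: "nash_eq k n x"
    and off: "\<exists>i<n. x i \<noteq> center" and j: "j \<in> {1..k}"
  shows "card {i \<in> {..<n}. fst (x i) = j} \<ge> 2 \<and>
           (\<exists>t. card {i \<in> {..<n}. x i = (j, t)} \<ge> 2 \<and> (\<forall>i<n. fst (x i) = j \<longrightarrow> snd (x i) \<le> t))"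
proof -
  obtain ic where ic: "ic < n" "x ic = center" using partA[OF k3 n2 ne] by blast
  have pts: "\<forall>m<n. star_pt k (x m)" using ne by (simp add: nash_eq_def)
  have ptm: "x m = center \<or> (1 \<le> fst (x m) \<and> fst (x m) \<le> k \<and> 0 < snd (x m) \<and> snd (x m) \<le> 1)" if "m < n" for m
    using pt_cases pts that by blast
  have j1: "1 \<le> j" "j \<le> k" using j by auto
  have nonempty: "\<exists>m<n. fst (x m) = j"
  proof (rule ccontr)
    assume emp: "\<not> (\<exists>m<n. fst (x m) = j)"
    obtain i0 where i0: "i0 < n" "x i0 \<noteq> center" using off by blast
    define e where "e = fst (x i0)"
    define s where "s = snd (x i0)"
    have es: "1 \<le> e" "e \<le> k" "0 < s" "s \<le> 1" using ptm[OF i0(1)] i0(2) by (auto simp: e_def s_def)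
    have xi0: "x i0 = (e, s)" by (simp add: e_def s_def)
    have up: "payoff k n x i0 \<le> 1 - s/2"
    proof -
      have "payoff k n x i0 \<le> eint n x i0 e"
        unfolding payoff_eint
      proof (rule sum_upper1)
        show "e \<in> {1..k}" using es by simp
        fix j' assume j': "j' \<in> {1..k}" "j' \<noteq> e"
        show "eint n x i0 j' \<le> 0"
        proof (rule eint_zero)
          fix t :: real assume "0 \<le> t" "t \<le> 1"
          have "star_dist (j',t) (x ic) < star_dist (j',t) (x i0)"
            using j' es by (simp add: ic(2) xi0 sdist2 center_def)
          then show "share n x i0 (j', t) \<le> 0" using share_zero[OF i0(1) ic(1)] by simp
        qed
      qed
      also have "eint n x i0 e \<le> 1 * (1 - s/2)"
      proof (rule eint_upper)
        show "0 \<le> s/2" "s/2 \<le> 1" using es by simp_all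
        show "share n x i0 (e, t) \<le> 1" for t by (rule share_le1g)
        fix t :: real assume t: "0 \<le> t" "t \<le> 1" "t < s/2 \<or> 1 < t"
        have "star_dist (e,t) (x ic) < star_dist (e,t) (x i0)"
          using t es by (auto simp: sdist2 xi0 ic(2) center_def abs_if)
        then show "share n x i0 (e, t) \<le> 0" using share_zero[OF i0(1) ic(1)] by simp
      qed simp_all
      finally show ?thesis by simp
    qed
    define y where "y = x(i0 := (j, s/4))"
    have "payoff k n y i0 \<le> payoff k n x i0"
      unfolding y_def by (rule ne_dev[OF ne i0(1) edge_pt]) (use j1 es in auto)
    moreover have "eint n y i0 j \<le> payoff k n y i0"
      unfolding payoff_eint by (rule sum_ge1[OF j]) (rule eint_nonneg)
    moreover have "eint n y i0 j \<ge> 1 - s/4"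
    proof (rule eint_lower)
      fix t :: real assume t: "s/4 < t" "t < 1"
      have "\<forall>m<n. m \<noteq> i0 \<longrightarrow> star_dist (j,t) (j, s/4) < star_dist (j,t) (x m)"
      proof (intro allI impI)
        fix m assume m: "m < n" "m \<noteq> i0"
        have dd: "star_dist (j,t) (j, s/4) = t - s/4" using t by (simp add: sdist2)
        show "star_dist (j,t) (j, s/4) < star_dist (j,t) (x m)"
        proof (cases "x m = center")
          case True then show ?thesis using dd j1 es by (simp add: sdist2 center_def)
        next
          case False
          then have pm: "0 < snd (x m)" using ptm[OF m(1)] by auto
          have "fst (x m) \<noteq> j" using emp m(1) by blast
          then show ?thesis using dd t es pm by (auto simp: sdist2)
        qed
      qed
      then show "1 \<le> share n y i0 (j, t)" unfolding y_def using share_dev_one[OF i0(1)] by simp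
    qed (use es in auto)
    ultimately show False using up es by argo
  qed
  obtain i1 where i1: "i1 < n" "fst (x i1) = j" "\<forall>m<n. fst (x m) = j \<longrightarrow> snd (x m) \<le> snd (x i1)"
    using ex_max_pl[of n "\<lambda>m. fst (x m) = j" "\<lambda>m. snd (x m)"] nonempty by blast
  define s1 where "s1 = snd (x i1)"
  have xi1: "x i1 = (j, s1)" using i1(2) by (simp add: s1_def prod_eq_iff)
  have s1: "0 < s1" "s1 \<le> 1" using ptm[OF i1(1)] i1(2) j1 by (auto simp: s1_def center_def)
  have c2: "card {m \<in> {..<n}. x m = (j, s1)} \<ge> 2"
  proof (rule ccontr)
    assume "\<not> ?thesis"
    moreover have "card {m \<in> {..<n}. x m = (j, s1)} \<ge> 1" using card_self_ge1[OF i1(1), of x] xi1 by simp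
    ultimately have c1: "card {m \<in> {..<n}. x m = x i1} = 1" using xi1 by simp
    have uniq: "m = i1" if "m < n" "x m = x i1" for m using card1_unique[OF c1 i1(1) that] .
    obtain u mu where u: "0 \<le> u" "u < s1" "mu < n" "\<forall>t\<ge>0. star_dist (j,t) (x mu) = \<bar>t - u\<bar>"
      "\<forall>m<n. fst (x m) = j \<longrightarrow> snd (x m) < s1 \<longrightarrow> snd (x m) \<le> u"
      using inner_nb[OF pts ic j1(1) s1(1)] by blast
    define \<alpha> where "\<alpha> = (u + s1) / 2"
    define \<epsilon> where "\<epsilon> = (s1 - u) / 2"
    have ae: "s1 - \<epsilon> = \<alpha>" by (simp add: \<alpha>_def \<epsilon>_def field_simps)
    have ep: "0 < \<epsilon>" using u by (simp add: \<epsilon>_def)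
    have a: "u < \<alpha>" "\<alpha> < s1" "0 < \<alpha>" using u by (simp_all add: \<alpha>_def)
    have lowb: "(5 * u + 3 * s1) / 8 = \<alpha> - \<epsilon> / 4" by (simp add: \<alpha>_def \<epsilon>_def field_simps)
    have up: "payoff k n x i1 \<le> 1 - \<alpha>"
    proof -
      have "payoff k n x i1 \<le> eint n x i1 j"
        unfolding payoff_eint
      proof (rule sum_upper1[OF j])
        fix j' assume j': "j' \<in> {1..k}" "j' \<noteq> j"
        show "eint n x i1 j' \<le> 0"
        proof (rule eint_zero)
          fix t :: real assume "0 \<le> t" "t \<le> 1"
          have "star_dist (j',t) (x ic) < star_dist (j',t) (x i1)"
            using j' s1 by (simp add: ic(2) xi1 sdist2 center_def)
          then show "share n x i1 (j', t) \<le> 0" using share_zero[OF i1(1) ic(1)] by simp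
        qed
      qed
      also have "eint n x i1 j \<le> 1 * (1 - \<alpha>)"
      proof (rule eint_upper)
        show "0 \<le> \<alpha>" "\<alpha> \<le> 1" using a s1 by simp_all
        show "share n x i1 (j, t) \<le> 1" for t by (rule share_le1g)
        fix t :: real assume t: "0 \<le> t" "t \<le> 1" "t < \<alpha> \<or> 1 < t"
        then have tl: "t < \<alpha>" by auto
        have "star_dist (j,t) (x mu) < star_dist (j,t) (x i1)"
          using u(4) t tl u(1,2) by (auto simp: xi1 sdist2 \<alpha>_def abs_if)
        then show "share n x i1 (j, t) \<le> 0" using share_zero[OF i1(1) u(3)] by simp
      qed simp_all
      finally show ?thesis by simp
    qed
    define y where "y = x(i1 := (j, \<alpha>))"
    have "payoff k n y i1 \<le> payoff k n x i1"
      unfolding y_def by (rule ne_dev[OF ne i1(1) edge_pt]) (use j1 a s1 in auto)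
    moreover have "eint n y i1 j \<le> payoff k n y i1"
      unfolding payoff_eint by (rule sum_ge1[OF j]) (rule eint_nonneg)
    moreover have "eint n y i1 j \<ge> 1 - (5 * u + 3 * s1) / 8"
    proof (rule eint_lower)
      show "0 \<le> (5 * u + 3 * s1) / 8" using u s1 by simp
      fix t :: real assume t: "(5 * u + 3 * s1) / 8 < t" "t < 1"
      have dd: "star_dist (j,t) (j, \<alpha>) = \<bar>t - \<alpha>\<bar>" by (simp add: sdist2)
      have key: "\<bar>t - \<alpha>\<bar> < t - u"
      proof (cases "t \<ge> \<alpha>")
        case True then show ?thesis using a by simp
      next
        case False
        have "(\<alpha> + u) / 2 < t" using t u(2) unfolding \<alpha>_def by argo
        then show ?thesis using False by simp
      qed
      have "\<forall>m<n. m \<noteq> i1 \<longrightarrow> star_dist (j,t) (j, \<alpha>) < star_dist (j,t) (x m)"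
      proof (intro allI impI)
        fix m assume m: "m < n" "m \<noteq> i1"
        show "star_dist (j,t) (j, \<alpha>) < star_dist (j,t) (x m)"
        proof (cases "x m = center")
          case True then show ?thesis using dd key j1 u(1) by (simp add: sdist2 center_def)
        next
          case False
          then have pm: "0 < snd (x m)" using ptm[OF m(1)] by auto
          show ?thesis
          proof (cases "fst (x m) = j")
            case True
            have le: "snd (x m) \<le> s1" using i1(3) m(1) True by (simp add: s1_def)
            have "x m \<noteq> x i1" using uniq m by blast
            then have "snd (x m) \<noteq> s1" using True xi1 by (auto simp: prod_eq_iff)
            then have "snd (x m) < s1" using le by simp
            then have "snd (x m) \<le> u" using u(5) m(1) True by blast
            then show ?thesis using dd key True by (auto simp: sdist2 abs_if)
          next
            case False
            then show ?thesis using dd key pm u(1) by (auto simp: sdist2)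
          qed
        qed
      qed
      then show "1 \<le> share n y i1 (j, t)" unfolding y_def using share_dev_one[OF i1(1)] by simp
    qed simp
    ultimately show False using up lowb ep by argo
  qed
  have "card {m \<in> {..<n}. x m = (j, s1)} \<le> card {i \<in> {..<n}. fst (x i) = j}"
    by (rule card_mono) auto
  then show ?thesis using c2 i1(3) by (auto simp: s1_def intro!: exI[of _ s1])
qed


theorem mainTheorem20:
  fixes k n :: nat and x :: "nat \<Rightarrow> spt"
  assumes "k \<ge> 3" and "n \<ge> 2" and "nash_eq k n x"
  shows "(\<exists>i<n. x i = center)
    \<and> (\<forall>p. star_pt k p \<and> p \<noteq> center \<longrightarrow> card {i \<in> {..<n}. x i = p} \<le> 2)
    \<and> card {i \<in> {..<n}. x i = center} \<le> k
    \<and> ((\<exists>i<n. x i \<noteq> center) \<longrightarrow>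
        (\<forall>j \<in> {1..k}. card {i \<in> {..<n}. fst (x i) = j} \<ge> 2 \<and>
           (\<exists>t. card {i \<in> {..<n}. x i = (j, t)} \<ge> 2 \<and>
                (\<forall>i<n. fst (x i) = j \<longrightarrow> snd (x i) \<le> t))))"
proof (intro conjI allI impI ballI)
  show "\<exists>i<n. x i = center" by (rule partA[OF assms])
  show "card {i \<in> {..<n}. x i = p} \<le> 2" if "star_pt k p \<and> p \<noteq> center" for p
    using partB[OF assms] that by blast
  show "card {i \<in> {..<n}. x i = center} \<le> k" by (rule partC[OF assms])
  fix j assume "\<exists>i<n. x i \<noteq> center" "j \<in> {1..k}"
  then show "card {i \<in> {..<n}. fst (x i) = j} \<ge> 2"
    and "\<exists>t. card {i \<in> {..<n}. x i = (j, t)} \<ge> 2 \<and> (\<forall>i<n. fst (x i) = j \<longrightarrow> snd (x i) \<le> t)"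
    using partD[OF assms] by blast+
qed

end
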